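(* Let $k$ be an algebraically closed field of characteristic $2$, $t$ transcendental over $k$, and $f(x)=a_2x^2+a_1x+a_0\in k[x]$ with $a_2a_1\neq0$. Then $\operatorname{Gal}(f^n(x)-t/k(t))\cong(C_2)^n$ for all $n\in\mathbb N$, where $C_2$ is the cyclic group of order $2$.
   Context: $f^n$ is $n$-fold composition; $\operatorname{Gal}(f^n(x)-t/k(t))$ is the Galois group of the splitting field of $f^n(x)-t$ over $k(t)$. *)

theory Defs
  imports "HOL-Algebra.Product_Groups" "HOL-Algebra.Elementary_Groups"
          "HOL-Computational_Algebra.Polynomial"
begin

text \<open>All fields live inside an ambient field of type 'b (type class field).\<close>

definition is_subfield :: "'b::field set \<Rightarrow> bool" where
  "is_subfield F \<longleftrightarrow> 0 \<in> F \<and> 1 \<in> F \<and>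
     (\<forall>x\<in>F. \<forall>y\<in>F. x + y \<in> F \<and> x * y \<in> F) \<and>
     (\<forall>x\<in>F. - x \<in> F \<and> inverse x \<in> F)"

text \<open>Subfield of the ambient field generated by a set S (e.g. k(t) = gen_field (insert t k)).\<close>
definition gen_field :: "'b::field set \<Rightarrow> 'b set" where
  "gen_field S = \<Inter>{F. is_subfield F \<and> S \<subseteq> F}"

definition poly_over :: "'b::field set \<Rightarrow> 'b poly \<Rightarrow> bool" where
  "poly_over k p \<longleftrightarrow> (\<forall>i. coeff p i \<in> k)"

definition alg_closed_subfield :: "'b::field set \<Rightarrow> bool" where
  "alg_closed_subfield k \<longleftrightarrow> is_subfield k \<and>
     (\<forall>p. poly_over k p \<and> degree p \<ge> 1 \<longrightarrow> (\<exists>x\<in>k. poly p x = 0))"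

definition transcendental_over :: "'b::field set \<Rightarrow> 'b \<Rightarrow> bool" where
  "transcendental_over k t \<longleftrightarrow> (\<forall>p. poly_over k p \<and> poly p t = 0 \<longrightarrow> p = 0)"

definition splits :: "'b::field poly \<Rightarrow> bool" where
  "splits p \<longleftrightarrow> (\<exists>c rs. p = smult c (\<Prod>r\<leftarrow>rs. [:- r, 1:]))"

definition poly_iter :: "'b::comm_ring_1 poly \<Rightarrow> nat \<Rightarrow> 'b poly" where
  "poly_iter f n = ((\<lambda>g. pcompose f g) ^^ n) [:0, 1:]"

text \<open>Splitting field of p over F inside the ambient field (assuming p splits there).\<close>
definition splitting_field :: "'b::field set \<Rightarrow> 'b poly \<Rightarrow> 'b set" where
  "splitting_field F p = gen_field (F \<union> {x. poly p x = 0})"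

definition field_auts_fixing :: "'b::field set \<Rightarrow> 'b set \<Rightarrow> ('b \<Rightarrow> 'b) set" where
  "field_auts_fixing L F = {\<sigma>. \<sigma> \<in> extensional L \<and> bij_betw \<sigma> L L \<and>
      (\<forall>x\<in>L. \<forall>y\<in>L. \<sigma> (x + y) = \<sigma> x + \<sigma> y \<and> \<sigma> (x * y) = \<sigma> x * \<sigma> y) \<and>
      (\<forall>x\<in>F. \<sigma> x = x)}"

text \<open>Automorphism group Aut(L/F), which is Gal(L/F) when L is a splitting field over F.\<close>
definition Gal_group :: "'b::field set \<Rightarrow> 'b set \<Rightarrow> ('b \<Rightarrow> 'b) monoid" where
  "Gal_group L F = \<lparr>carrier = field_auts_fixing L F,
                     monoid.mult = (\<lambda>\<sigma> \<tau>. compose L \<sigma> \<tau>),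
                     one = restrict id L\<rparr>"

definition C2_power :: "nat \<Rightarrow> (nat \<Rightarrow> int) monoid" where
  "C2_power n = product_group {..<n} (\<lambda>_. integer_mod_group 2)"

end

theory Submission
  imports Defs
begin

lemma sf_0: "is_subfield F \<Longrightarrow> 0 \<in> F" by (simp add: is_subfield_def)
lemma sf_1: "is_subfield F \<Longrightarrow> 1 \<in> F" by (simp add: is_subfield_def)
lemma sf_add: "is_subfield F \<Longrightarrow> x \<in> F \<Longrightarrow> y \<in> F \<Longrightarrow> x + y \<in> F" by (simp add: is_subfield_def)
lemma sf_mult: "is_subfield F \<Longrightarrow> x \<in> F \<Longrightarrow> y \<in> F \<Longrightarrow> x * y \<in> F" by (simp add: is_subfield_def)
lemma sf_uminus: "is_subfield F \<Longrightarrow> x \<in> F \<Longrightarrow> - x \<in> F" by (simp add: is_subfield_def)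
lemma sf_inverse: "is_subfield F \<Longrightarrow> x \<in> F \<Longrightarrow> inverse x \<in> F" by (simp add: is_subfield_def)
lemma sf_diff: "is_subfield F \<Longrightarrow> x \<in> F \<Longrightarrow> y \<in> F \<Longrightarrow> x - y \<in> F"
  using sf_add sf_uminus by (metis diff_conv_add_uminus)
lemma sf_divide: "is_subfield F \<Longrightarrow> x \<in> F \<Longrightarrow> y \<in> F \<Longrightarrow> x / y \<in> F"
  using sf_mult sf_inverse by (metis divide_inverse)
lemma sf_power: "is_subfield F \<Longrightarrow> x \<in> F \<Longrightarrow> x ^ m \<in> F"
  by (induct m) (auto intro: sf_1 sf_mult)

lemma gen_field_sub: "is_subfield F \<Longrightarrow> S \<subseteq> F \<Longrightarrow> gen_field S \<subseteq> F"
  unfolding gen_field_def by blast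
lemma gen_field_incl: "S \<subseteq> gen_field S"
  unfolding gen_field_def by blast
lemma gen_field_subfield: "is_subfield (gen_field S)"
  unfolding gen_field_def is_subfield_def by blast

lemma poly_over_pCons: "poly_over k (pCons a p) \<longleftrightarrow> a \<in> k \<and> poly_over k p"
  unfolding poly_over_def
  by (metis coeff_pCons_0 coeff_pCons_Suc not0_implies_Suc)

lemma poly_over_0: "is_subfield k \<Longrightarrow> poly_over k 0"
  by (simp add: poly_over_def sf_0)

lemma poly_over_const: "is_subfield k \<Longrightarrow> c \<in> k \<Longrightarrow> poly_over k [:c:]"
  by (simp add: poly_over_pCons poly_over_0)

lemma poly_over_add: "is_subfield k \<Longrightarrow> poly_over k p \<Longrightarrow> poly_over k q \<Longrightarrow> poly_over k (p + q)"
  by (simp add: poly_over_def sf_add)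

lemma poly_over_uminus: "is_subfield k \<Longrightarrow> poly_over k p \<Longrightarrow> poly_over k (- p)"
  by (simp add: poly_over_def sf_uminus)

lemma poly_over_diff: "is_subfield k \<Longrightarrow> poly_over k p \<Longrightarrow> poly_over k q \<Longrightarrow> poly_over k (p - q)"
  by (simp add: poly_over_def sf_diff)

lemma poly_over_smult: "is_subfield k \<Longrightarrow> a \<in> k \<Longrightarrow> poly_over k p \<Longrightarrow> poly_over k (smult a p)"
  by (simp add: poly_over_def sf_mult)

lemma poly_over_mult: "is_subfield k \<Longrightarrow> poly_over k p \<Longrightarrow> poly_over k q \<Longrightarrow> poly_over k (p * q)"
proof (induct p)
  case 0 then show ?case by (simp add: poly_over_0)
next
  case (pCons a p)
  then show ?case
    by (simp add: poly_over_pCons poly_over_add poly_over_smult sf_0)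
qed

lemma poly_over_pcompose: "is_subfield k \<Longrightarrow> poly_over k p \<Longrightarrow> poly_over k q \<Longrightarrow> poly_over k (pcompose p q)"
proof (induct p)
  case 0 then show ?case by (simp add: poly_over_0)
next
  case (pCons a p)
  then show ?case
    by (simp add: pcompose_pCons poly_over_pCons, intro poly_over_add poly_over_mult poly_over_const) auto
qed

lemma poly_in_sf: "is_subfield F \<Longrightarrow> k \<subseteq> F \<Longrightarrow> poly_over k p \<Longrightarrow> x \<in> F \<Longrightarrow> poly p x \<in> F"
proof (induct p)
  case 0 then show ?case by (simp add: sf_0)
next
  case (pCons a p)
  then show ?case by (auto simp: poly_over_pCons intro!: sf_add sf_mult)
qed

lemma poly_over_synthetic_div: "is_subfield k \<Longrightarrow> poly_over k p \<Longrightarrow> c \<in> k \<Longrightarrow> poly_over k (synthetic_div p c)"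
proof (induct p)
  case 0 then show ?case by (simp add: poly_over_0)
next
  case (pCons a p)
  then show ?case by (auto simp: poly_over_pCons intro: poly_in_sf)
qed

lemma alg_closed_root_in:
  assumes "alg_closed_subfield k" "poly_over k p" "p \<noteq> 0" "poly p y = 0"
  shows "y \<in> k"
  using assms(2-4)
proof (induction "degree p" arbitrary: p rule: less_induct)
  case less
  have sf: "is_subfield k" using assms(1) alg_closed_subfield_def by blast
  show ?case
  proof (cases "degree p = 0")
    case True
    then obtain c where "p = [:c:]" by (metis degree_eq_zeroE)
    with less show ?thesis by simp
  next
    case False
    then obtain x where x: "x \<in> k" "poly p x = 0"
      using assms(1) less.prems unfolding alg_closed_subfield_def by auto
    define q where "q = synthetic_div p x"
    have pq: "p = [:-x, 1:] * q" using synthetic_div_correct'[of x p] x by (simp add: q_def)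
    have qo: "poly_over k q" using poly_over_synthetic_div[OF sf less.prems(1) x(1)] q_def by simp
    have dq: "degree q < degree p" using False by (simp add: q_def degree_synthetic_div)
    have q0: "q \<noteq> 0" using pq less.prems(2) by auto
    from less.prems(3) pq have "y = x \<or> poly q y = 0" by (simp del: mult_pCons_left) 
    then show ?thesis using less.hyps[OF dq qo q0] x by auto
  qed
qed



lemma poly_iter_Suc: "poly_iter p (Suc n) = pcompose p (poly_iter p n)"
  by (simp add: poly_iter_def)

lemma poly_poly_iter: "poly (poly_iter p n) x = (poly p ^^ n) x"
  by (induct n arbitrary: x) (simp_all add: poly_iter_Suc poly_pcompose, simp add: poly_iter_def)

lemma degree_poly_iter: "degree (poly_iter (p::'b::field poly) n) = degree p ^ n"
  by (induct n) (simp_all add: poly_iter_Suc degree_pcompose, simp add: poly_iter_def)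

lemma poly_over_iter: "is_subfield k \<Longrightarrow> poly_over k p \<Longrightarrow> poly_over k (poly_iter p n)"
proof (induct n)
  case 0 then show ?case
    by (simp add: poly_iter_def poly_over_pCons poly_over_0 sf_0 sf_1)
next
  case (Suc n) then show ?case by (simp add: poly_iter_Suc poly_over_pcompose)
qed

lemma char2_two: "CHAR('b::field) = 2 \<Longrightarrow> (2::'b) = 0"
  using of_nat_CHAR[where 'a='b] by simp

lemma char2_xx: "CHAR('b::field) = 2 \<Longrightarrow> (x::'b) + x = 0"
proof -
  assume "CHAR('b) = 2"
  then have "(2::'b) = 0" by (rule char2_two)
  then have "2 * x = 0" by (metis mult_zero_left)
  then show ?thesis by (metis mult_2)
qed

lemma char2_quad: "CHAR('b::field) = 2 \<Longrightarrow>
   poly [:u, v, w:] ((x::'b) + d) = poly [:u, v, w:] x + poly [:0, v, w:] d"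
proof -
  assume c: "CHAR('b) = 2"
  have e: "\<And>z. poly [:u, v, w:] z = u + v*z + w*z*z" "\<And>z. poly [:0, v, w:] z = v*z + w*z*z"
    by (simp_all add: algebra_simps)
  have "u + v*(x+d) + w*(x+d)*(x+d) = (u + v*x + w*x*x) + (v*d + w*d*d) + (x*d*w + x*d*w)"
    by algebra
  then have "poly [:u, v, w:] (x + d) = poly [:u, v, w:] x + poly [:0, v, w:] d + (x*d*w + x*d*w)"
    by (simp only: e)
  then show ?thesis using char2_xx[OF c] by simp
qed

lemma iter_add: "CHAR('b::field) = 2 \<Longrightarrow>
   (poly [:u, v, w:] ^^ n) ((x::'b) + d) = (poly [:u, v, w:] ^^ n) x + (poly [:0, v, w:] ^^ n) d"
proof (induct n)
  case 0 then show ?case by simp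
next
  case (Suc n)
  assume c: "CHAR('b) = 2"
  show ?case
    by (simp only: funpow.simps o_apply Suc(1)[OF c] char2_quad[OF c])
qed


locale gsetup =
  fixes k :: "'b::field set" and t a0 a1 a2 :: 'b and n :: nat and r :: 'b
  assumes char: "CHAR('b) = 2" and ac: "alg_closed_subfield k" and tr: "transcendental_over k t"
    and a0: "a0 \<in> k" and a1: "a1 \<in> k" and a2: "a2 \<in> k" and a21: "a2 * a1 \<noteq> 0"
    and root: "(poly [:a0,a1,a2:] ^^ n) r = t"
begin

definition "Fq = poly [:a0,a1,a2:]"
abbreviation "Fn \<equiv> Fq ^^ n"
definition "Lf = poly [:0,a1,a2:]"
abbreviation "Ln \<equiv> Lf ^^ n"

lemma root': "Fn r = t" using root by (simp add: Fq_def)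

lemma sf: "is_subfield k" using ac alg_closed_subfield_def by blast

lemma Lm_add: "(Lf ^^ m) (x + y) = (Lf ^^ m) x + (Lf ^^ m) y"
  using iter_add[OF char, where u=0 and v=a1 and w=a2 and n=m and x=x and d=y] unfolding Lf_def .

lemma Lm_0: "(Lf ^^ m) 0 = 0"
  using Lm_add[of m 0 0] char2_xx[OF char] by (metis add_0)

lemma Lm_sum: "finite S \<Longrightarrow> (Lf ^^ m) (\<Sum>j\<in>S. g j) = (\<Sum>j\<in>S. (Lf ^^ m) (g j))"
  by (induct S rule: finite_induct) (simp_all add: Lm_0 Lm_add)

lemma Fn_add: "Fn (x + d) = Fn x + Ln d"
  using iter_add[OF char] unfolding Lf_def Fq_def .

definition "LnP = poly_iter [:0,a1,a2:] n"
definition "FnP = poly_iter [:a0,a1,a2:] n"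

lemma poly_LnP: "poly LnP x = Ln x" by (simp add: LnP_def poly_poly_iter Lf_def)
lemma poly_FnP: "poly FnP x = Fn x" by (simp add: FnP_def poly_poly_iter Fq_def)

lemma a2_nz: "a2 \<noteq> 0" and a1_nz: "a1 \<noteq> 0" using a21 by auto

lemma LnP_nz: "LnP \<noteq> 0"
proof -
  have "degree LnP = 2 ^ n" using a2_nz by (simp add: LnP_def degree_poly_iter numeral_2_eq_2)
  then show ?thesis by (metis degree_0 power_not_zero zero_neq_numeral)
qed

lemma LnP_over: "poly_over k LnP"
  unfolding LnP_def using sf a1 a2
  by (intro poly_over_iter) (auto simp: poly_over_pCons poly_over_0 sf_0)

lemma FnP_over: "poly_over k FnP"
  unfolding FnP_def using sf a0 a1 a2
  by (intro poly_over_iter) (auto simp: poly_over_pCons poly_over_0 sf_0)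

lemma degree_LnP: "degree LnP = 2 ^ n"
  using a2_nz by (simp add: LnP_def degree_poly_iter numeral_2_eq_2)

lemma degree_FnP: "degree FnP = 2 ^ n"
  using a2_nz by (simp add: FnP_def degree_poly_iter numeral_2_eq_2)

lemma V_in_k: "Ln d = 0 \<Longrightarrow> d \<in> k"
  using alg_closed_root_in[OF ac LnP_over LnP_nz] poly_LnP by metis

lemma t_notin: "t \<notin> k"
proof
  assume "t \<in> k"
  then have "poly_over k [:-t, 1:]" using sf by (simp add: poly_over_pCons poly_over_0 sf_uminus sf_1)
  moreover have "poly [:-t, 1:] t = 0" by simp
  ultimately show False using tr unfolding transcendental_over_def by fastforce
qed

lemma trans_root: "Fn y = t \<Longrightarrow> poly_over k p \<Longrightarrow> poly p y = 0 \<Longrightarrow> p = 0"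
proof (rule ccontr)
  assume h: "Fn y = t" "poly_over k p" "poly p y = 0" "p \<noteq> 0"
  then have "y \<in> k" using alg_closed_root_in[OF ac] by blast
  then have "poly FnP y \<in> k" using poly_in_sf[OF sf _ FnP_over] by blast
  then show False using h t_notin poly_FnP by simp
qed

lemma nz_at_r: "poly_over k q \<Longrightarrow> q \<noteq> 0 \<Longrightarrow> poly q r \<noteq> 0"
  using trans_root[OF root'] by blast

lemma po1: "poly_over k 1"
  using poly_over_const[OF sf sf_1[OF sf]] by (metis one_pCons)

lemma poX: "poly_over k [:0, 1:]"
  using sf by (simp add: poly_over_pCons poly_over_0 sf_0 sf_1)

definition "Sr = {poly p r / poly q r | p q. poly_over k p \<and> poly_over k q \<and> q \<noteq> 0}"

lemma Sr_I: "poly_over k p \<Longrightarrow> poly_over k q \<Longrightarrow> q \<noteq> 0 \<Longrightarrow> poly p r / poly q r \<in> Sr"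
  unfolding Sr_def by blast

lemma k_Sr: "k \<subseteq> Sr"
proof
  fix c assume "c \<in> k"
  then show "c \<in> Sr" using Sr_I[of "[:c:]" 1] sf po1 by (simp add: poly_over_const)
qed

lemma r_Sr: "r \<in> Sr"
  using Sr_I[of "[:0,1:]" 1] poX po1 by simp

lemma poly_Sr: "poly_over k p \<Longrightarrow> poly p r \<in> Sr"
  using Sr_I[of p 1] po1 by simp

lemma Sr_subfield: "is_subfield Sr"
  unfolding is_subfield_def
proof (intro conjI ballI)
  show "0 \<in> Sr" using k_Sr sf sf_0 by blast
  show "1 \<in> Sr" using k_Sr sf sf_1 by blast
  fix x y assume "x \<in> Sr" "y \<in> Sr"
  then obtain p q p' q' where x: "x = poly p r / poly q r" "poly_over k p" "poly_over k q" "q \<noteq> 0"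
    and y: "y = poly p' r / poly q' r" "poly_over k p'" "poly_over k q'" "q' \<noteq> 0"
    unfolding Sr_def by blast
  have q: "poly q r \<noteq> 0" "poly q' r \<noteq> 0" using nz_at_r x y by auto
  have "x + y = poly (p * q' + p' * q) r / poly (q * q') r"
    by (simp only: x(1) y(1) add_frac_eq[OF q] poly_add poly_mult)
  then show "x + y \<in> Sr" using x y sf
    by (metis Sr_I poly_over_add poly_over_mult mult_eq_0_iff)
  have "x * y = poly (p * p') r / poly (q * q') r"
    by (simp only: x(1) y(1) times_divide_times_eq poly_mult)
  then show "x * y \<in> Sr" using x y sf
    by (metis Sr_I poly_over_mult mult_eq_0_iff)
next
  fix x assume "x \<in> Sr"
  then obtain p q where x: "x = poly p r / poly q r" "poly_over k p" "poly_over k q" "q \<noteq> 0"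
    unfolding Sr_def by blast
  have "- x = poly (- p) r / poly q r" by (simp only: x(1) minus_divide_left poly_minus)
  then show "- x \<in> Sr" using x sf by (metis Sr_I poly_over_uminus)
  show "inverse x \<in> Sr"
  proof (cases "p = 0")
    case True
    then show ?thesis using x k_Sr sf sf_0 by auto
  next
    case False
    then have "inverse x = poly q r / poly p r" by (simp only: x(1) inverse_divide)
    then show ?thesis using x False Sr_I by simp
  qed
qed

lemma Sr_min: "is_subfield F \<Longrightarrow> k \<subseteq> F \<Longrightarrow> r \<in> F \<Longrightarrow> Sr \<subseteq> F"
proof
  fix x assume F: "is_subfield F" "k \<subseteq> F" "r \<in> F" and "x \<in> Sr"
  then obtain p q where x: "x = poly p r / poly q r" "poly_over k p" "poly_over k q"
    unfolding Sr_def by blast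
  have "poly p r \<in> F" "poly q r \<in> F" using poly_in_sf[OF F(1,2)] x F(3) by auto
  then show "x \<in> F" using x(1) sf_divide[OF F(1)] by simp
qed

abbreviation "Kt \<equiv> gen_field (insert t k)"

lemma Kt_Sr: "Kt \<subseteq> Sr"
proof (rule gen_field_sub[OF Sr_subfield])
  have "t \<in> Sr" using poly_Sr[OF FnP_over] root' poly_FnP by simp
  then show "insert t k \<subseteq> Sr" using k_Sr by blast
qed

lemma roots_g: "poly (poly_iter [:a0,a1,a2:] n - [:t:]) y = 0 \<longleftrightarrow> Fn y = t"
proof -
  have "poly (poly_iter [:a0,a1,a2:] n - [:t:]) y = poly FnP y - t"
    by (simp only: FnP_def poly_diff poly_pCons poly_0 mult_zero_right add_0_right)
  then show ?thesis using poly_FnP by simp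
qed

lemma roots_sub: "Fn y = t \<Longrightarrow> y \<in> Sr"
proof -
  assume "Fn y = t"
  then have "Fn (r + (y - r)) = Fn r" using root' by simp
  then have "Ln (y - r) = 0" using Fn_add[of r "y - r"] by simp
  then have d: "y - r \<in> k" by (rule V_in_k)
  have "poly [:y - r, 1:] r = y" by simp
  moreover have "poly_over k [:y - r, 1:]" using d sf by (simp add: poly_over_pCons poly_over_0 sf_1)
  ultimately show "y \<in> Sr" using poly_Sr by metis
qed

lemma split_eq: "splitting_field Kt (poly_iter [:a0,a1,a2:] n - [:t:]) = Sr"
proof
  let ?R = "{x. poly (poly_iter [:a0,a1,a2:] n - [:t:]) x = 0}"
  have R: "?R = {x. Fn x = t}" using roots_g by blast
  show "splitting_field Kt (poly_iter [:a0,a1,a2:] n - [:t:]) \<subseteq> Sr"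
    unfolding splitting_field_def
  proof (rule gen_field_sub[OF Sr_subfield])
    have "?R \<subseteq> Sr" unfolding R using roots_sub by blast
    then show "Kt \<union> ?R \<subseteq> Sr" using Kt_Sr by (rule Un_least[rotated])
  qed
  have sub: "Kt \<union> ?R \<subseteq> gen_field (Kt \<union> ?R)" by (rule gen_field_incl)
  have "k \<subseteq> Kt" using gen_field_incl[of "insert t k"] by (meson subset_insertI subset_trans)
  then have k: "k \<subseteq> gen_field (Kt \<union> ?R)" using sub by (meson le_supE subset_trans)
  have "r \<in> ?R" unfolding R using root' by simp
  then have r: "r \<in> gen_field (Kt \<union> ?R)" using sub by (meson UnCI subsetD)
  show "Sr \<subseteq> splitting_field Kt (poly_iter [:a0,a1,a2:] n - [:t:])"
    unfolding splitting_field_def by (rule Sr_min[OF gen_field_subfield k r])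
qed

end



definition homL :: "'b::field set \<Rightarrow> ('b \<Rightarrow> 'b) \<Rightarrow> bool" where
  "homL L s \<longleftrightarrow> (\<forall>x\<in>L. \<forall>y\<in>L. s (x + y) = s x + s y \<and> s (x * y) = s x * s y) \<and> s 1 = 1"

lemma homL_add: "homL L s \<Longrightarrow> x \<in> L \<Longrightarrow> y \<in> L \<Longrightarrow> s (x + y) = s x + s y"
  by (simp add: homL_def)
lemma homL_mult: "homL L s \<Longrightarrow> x \<in> L \<Longrightarrow> y \<in> L \<Longrightarrow> s (x * y) = s x * s y"
  by (simp add: homL_def)
lemma homL_1: "homL L s \<Longrightarrow> s 1 = 1"
  by (simp add: homL_def)

lemma homL_0: "is_subfield L \<Longrightarrow> homL L s \<Longrightarrow> s 0 = 0"
proof -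
  assume "is_subfield L" "homL L s"
  then have "s (0 + 0) = s 0 + s 0" using homL_add[of L s 0 0] sf_0 by blast
  then have "s 0 + 0 = s 0 + s 0" by simp
  then show ?thesis by (metis add_left_cancel)
qed

lemma homL_uminus: "is_subfield L \<Longrightarrow> homL L s \<Longrightarrow> x \<in> L \<Longrightarrow> s (- x) = - s x"
proof -
  assume L: "is_subfield L" "homL L s" "x \<in> L"
  have "s (x + - x) = s x + s (- x)" using homL_add[OF L(2) L(3) sf_uminus[OF L(1,3)]] .
  then have "0 = s x + s (- x)" using homL_0[OF L(1,2)] by simp
  then show ?thesis by (simp add: eq_neg_iff_add_eq_0 add.commute)
qed

lemma homL_inverse: "is_subfield L \<Longrightarrow> homL L s \<Longrightarrow> x \<in> L \<Longrightarrow> s (inverse x) = inverse (s x)"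
proof (cases "x = 0")
  case True
  assume L: "is_subfield L" "homL L s" "x \<in> L"
  then show ?thesis using True homL_0[OF L(1,2)] by simp
next
  case False
  assume L: "is_subfield L" "homL L s" "x \<in> L"
  have "s (x * inverse x) = s x * s (inverse x)" using homL_mult[OF L(2) L(3) sf_inverse[OF L(1,3)]] .
  then have "1 = s x * s (inverse x)" using homL_1[OF L(2)] False by simp
  then show ?thesis by (metis inverse_unique)
qed

lemma agree_subfield:
  assumes L: "is_subfield L" and s: "homL L s" and u: "homL L u"
  shows "is_subfield {x\<in>L. s x = u x}"
  unfolding is_subfield_def
proof (intro conjI ballI)
  show "0 \<in> {x \<in> L. s x = u x}" by (simp add: homL_0[OF L s] homL_0[OF L u] sf_0[OF L])
  show "1 \<in> {x \<in> L. s x = u x}" by (simp add: homL_1[OF s] homL_1[OF u] sf_1[OF L])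
  fix x y assume x: "x \<in> {x \<in> L. s x = u x}" and y: "y \<in> {x \<in> L. s x = u x}"
  then have xy: "x \<in> L" "y \<in> L" "s x = u x" "s y = u y" by auto
  show "x + y \<in> {x \<in> L. s x = u x}"
    using homL_add[OF s xy(1,2)] homL_add[OF u xy(1,2)] sf_add[OF L xy(1,2)] xy(3,4) by simp
  show "x * y \<in> {x \<in> L. s x = u x}"
    using homL_mult[OF s xy(1,2)] homL_mult[OF u xy(1,2)] sf_mult[OF L xy(1,2)] xy(3,4) by simp
next
  fix x assume "x \<in> {x \<in> L. s x = u x}"
  then have x: "x \<in> L" "s x = u x" by auto
  show "- x \<in> {x \<in> L. s x = u x}"
    using homL_uminus[OF L s x(1)] homL_uminus[OF L u x(1)] sf_uminus[OF L x(1)] x(2) by simp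
  show "inverse x \<in> {x \<in> L. s x = u x}"
    using homL_inverse[OF L s x(1)] homL_inverse[OF L u x(1)] sf_inverse[OF L x(1)] x(2) by simp
qed

lemma homL_id: "homL L id" by (simp add: homL_def)

lemma hom_poly:
  assumes L: "is_subfield L" "k \<subseteq> L" and s: "homL L s" and fx: "\<forall>c\<in>k. s c = c"
  shows "poly_over k p \<Longrightarrow> x \<in> L \<Longrightarrow> s (poly p x) = poly p (s x)"
proof (induct p)
  case 0 then show ?case using homL_0[OF L(1) s] by simp
next
  case (pCons a p)
  have a: "a \<in> k" "poly_over k p" using pCons.prems poly_over_pCons by blast+
  have px: "poly p x \<in> L" using poly_in_sf[OF L a(2) pCons.prems(2)] .
  have "s (poly (pCons a p) x) = s a + s (x * poly p x)"
    using homL_add[OF s _ sf_mult[OF L(1) pCons.prems(2) px]] a L by auto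
  also have "\<dots> = a + s x * poly p (s x)"
    using homL_mult[OF s pCons.prems(2) px] pCons.hyps a pCons.prems fx by auto
  finally show ?case by simp
qed

context gsetup
begin

definition "V = {d. Ln d = 0}"

lemma V_k: "d \<in> V \<Longrightarrow> d \<in> k" unfolding V_def using V_in_k by blast
lemma V_add: "d \<in> V \<Longrightarrow> e \<in> V \<Longrightarrow> d + e \<in> V" unfolding V_def using Lm_add by simp
lemma V_0: "0 \<in> V" unfolding V_def using Lm_0 by simp
lemma root_shift: "d \<in> V \<Longrightarrow> Fn (r + d) = t" unfolding V_def using Fn_add root' by simp

lemma nz_at: "d \<in> V \<Longrightarrow> poly_over k q \<Longrightarrow> q \<noteq> 0 \<Longrightarrow> poly q (r + d) \<noteq> 0"
  using trans_root[OF root_shift] by blast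

lemma wd:
  assumes d: "d \<in> V" and p: "poly_over k p" "poly_over k q" "q \<noteq> 0"
    and p': "poly_over k p'" "poly_over k q'" "q' \<noteq> 0"
    and eq: "poly p r / poly q r = poly p' r / poly q' r"
  shows "poly p (r + d) / poly q (r + d) = poly p' (r + d) / poly q' (r + d)"
proof -
  have "poly p r * poly q' r = poly p' r * poly q r"
    using eq nz_at_r p p' by (simp add: frac_eq_eq)
  then have "poly (p * q' - p' * q) r = 0" by simp
  moreover have "poly_over k (p * q' - p' * q)" using p p' sf by (simp add: poly_over_diff poly_over_mult)
  ultimately have "p * q' - p' * q = 0" using nz_at_r by blast
  then have "poly p (r + d) * poly q' (r + d) = poly p' (r + d) * poly q (r + d)"
    by (metis poly_mult right_minus_eq)
  then show ?thesis using nz_at[OF d] p p' by (simp add: frac_eq_eq)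
qed

definition "tau d = restrict (\<lambda>x. SOME y. \<exists>p q. poly_over k p \<and> poly_over k q \<and> q \<noteq> 0 \<and>
    x = poly p r / poly q r \<and> y = poly p (r + d) / poly q (r + d)) Sr"

lemma tau_eval:
  assumes d: "d \<in> V" and p: "poly_over k p" "poly_over k q" "q \<noteq> 0"
  shows "tau d (poly p r / poly q r) = poly p (r + d) / poly q (r + d)"
proof -
  let ?x = "poly p r / poly q r"
  let ?P = "\<lambda>y. \<exists>p q. poly_over k p \<and> poly_over k q \<and> q \<noteq> 0 \<and>
    ?x = poly p r / poly q r \<and> y = poly p (r + d) / poly q (r + d)"
  have "?P (poly p (r + d) / poly q (r + d))" using p by blast
  then have "?P (SOME y. ?P y)" by (rule someI)
  then obtain p' q' where p': "poly_over k p'" "poly_over k q'" "q' \<noteq> 0"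
     "?x = poly p' r / poly q' r" "(SOME y. ?P y) = poly p' (r + d) / poly q' (r + d)" by blast
  have "?x \<in> Sr" using Sr_I p by blast
  then have "tau d ?x = (SOME y. ?P y)" unfolding tau_def by simp
  also have "\<dots> = poly p (r + d) / poly q (r + d)"
    using wd[OF d p p'(1-3) p'(4)] p'(5) by simp
  finally show ?thesis .
qed

lemma shift_poly: "poly p (r + d) = poly (pcompose p [:d, 1:]) r"
  by (simp add: poly_pcompose add.commute)

lemma Sr_E: "x \<in> Sr \<Longrightarrow> (\<And>p q. poly_over k p \<Longrightarrow> poly_over k q \<Longrightarrow> q \<noteq> 0 \<Longrightarrow> x = poly p r / poly q r \<Longrightarrow> P) \<Longrightarrow> P"
  unfolding Sr_def by blast

lemma poD: "d \<in> k \<Longrightarrow> poly_over k [:d, 1:]"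
  using sf by (simp add: poly_over_pCons poly_over_0 sf_1)

lemma tau_shift:
  assumes d: "d \<in> V" and p: "poly_over k p" "poly_over k q" "q \<noteq> 0"
  shows "tau d (poly p r / poly q r) = poly (pcompose p [:d, 1:]) r / poly (pcompose q [:d, 1:]) r"
    and "poly_over k (pcompose p [:d, 1:])" "poly_over k (pcompose q [:d, 1:])" "pcompose q [:d, 1:] \<noteq> 0"
proof -
  show "tau d (poly p r / poly q r) = poly (pcompose p [:d, 1:]) r / poly (pcompose q [:d, 1:]) r"
    using tau_eval[OF d p] shift_poly by simp
  show "poly_over k (pcompose p [:d, 1:])" "poly_over k (pcompose q [:d, 1:])"
    using p poly_over_pcompose[OF sf] poD[OF V_k[OF d]] by auto
  show "pcompose q [:d, 1:] \<noteq> 0" using nz_at[OF d p(2,3)] shift_poly by (metis poly_0)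
qed

lemma tau_in: "d \<in> V \<Longrightarrow> x \<in> Sr \<Longrightarrow> tau d x \<in> Sr"
  by (erule Sr_E) (metis Sr_I tau_shift)

lemma tau_comp: "d \<in> V \<Longrightarrow> e \<in> V \<Longrightarrow> x \<in> Sr \<Longrightarrow> tau d (tau e x) = tau (d + e) x"
proof (erule Sr_E)
  fix p q assume d: "d \<in> V" and e: "e \<in> V" and p: "poly_over k p" "poly_over k q" "q \<noteq> 0"
    and x: "x = poly p r / poly q r"
  note s = tau_shift[OF e p]
  have "tau d (tau e x) = poly (pcompose p [:e, 1:]) (r + d) / poly (pcompose q [:e, 1:]) (r + d)"
    using x s tau_eval[OF d s(2-4)] by simp
  also have "\<dots> = poly p (r + (d + e)) / poly q (r + (d + e))"
    by (simp add: poly_pcompose algebra_simps)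
  also have "\<dots> = tau (d + e) x" using tau_eval[OF V_add[OF d e] p] x by simp
  finally show ?thesis .
qed

lemma tau_0: "x \<in> Sr \<Longrightarrow> tau 0 x = x"
  by (erule Sr_E) (simp add: tau_eval[OF V_0])

lemma tau_invol: "d \<in> V \<Longrightarrow> x \<in> Sr \<Longrightarrow> tau d (tau d x) = x"
  using tau_comp tau_0 char2_xx[OF char] by metis

lemma tau_hom: "d \<in> V \<Longrightarrow> homL Sr (tau d)"
  unfolding homL_def
proof (intro conjI ballI)
  assume d: "d \<in> V"
  show "tau d 1 = 1" using tau_eval[OF d po1 po1] by simp
  fix x y assume "x \<in> Sr" "y \<in> Sr"
  then obtain p q p' q' where x: "poly_over k p" "poly_over k q" "q \<noteq> 0" "x = poly p r / poly q r"
    and y: "poly_over k p'" "poly_over k q'" "q' \<noteq> 0" "y = poly p' r / poly q' r"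
    by (metis Sr_E)
  have q: "poly q r \<noteq> 0" "poly q' r \<noteq> 0" using nz_at_r x y by auto
  have qd: "poly q (r+d) \<noteq> 0" "poly q' (r+d) \<noteq> 0" using nz_at[OF d] x y by auto
  have o: "poly_over k (p * q' + p' * q)" "poly_over k (q * q')" "q * q' \<noteq> 0" "poly_over k (p * p')"
    using x y sf by (auto intro: poly_over_add poly_over_mult)
  have "x + y = poly (p * q' + p' * q) r / poly (q * q') r"
    by (simp only: x(4) y(4) add_frac_eq[OF q] poly_add poly_mult)
  then have "tau d (x + y) = poly (p * q' + p' * q) (r+d) / poly (q * q') (r+d)"
    using tau_eval[OF d o(1-3)] by simp
  also have "\<dots> = tau d x + tau d y"
    by (simp only: x(4) y(4) tau_eval[OF d x(1-3)] tau_eval[OF d y(1-3)] add_frac_eq[OF qd] poly_add poly_mult)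
  finally show "tau d (x + y) = tau d x + tau d y" .
  have "x * y = poly (p * p') r / poly (q * q') r"
    by (simp only: x(4) y(4) times_divide_times_eq poly_mult)
  then have "tau d (x * y) = poly (p * p') (r+d) / poly (q * q') (r+d)"
    using tau_eval[OF d o(4,2,3)] by simp
  also have "\<dots> = tau d x * tau d y"
    by (simp only: x(4) y(4) tau_eval[OF d x(1-3)] tau_eval[OF d y(1-3)] times_divide_times_eq poly_mult)
  finally show "tau d (x * y) = tau d x * tau d y" .
qed

lemma tau_k: "d \<in> V \<Longrightarrow> c \<in> k \<Longrightarrow> tau d c = c"
  using tau_eval[of d "[:c:]" 1] po1 poly_over_const[OF sf] by simp

lemma tau_r: "d \<in> V \<Longrightarrow> tau d r = r + d"
  using tau_eval[of d "[:0,1:]" 1] po1 poX by simp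

lemma tau_t: "d \<in> V \<Longrightarrow> tau d t = t"
  using tau_eval[of d FnP 1] po1 FnP_over poly_FnP root' root_shift by simp

lemma t_Sr: "t \<in> Sr" using Kt_Sr gen_field_incl by blast

lemma tau_Gal: "d \<in> V \<Longrightarrow> tau d \<in> field_auts_fixing Sr Kt"
  unfolding field_auts_fixing_def
proof (intro CollectI conjI)
  assume d: "d \<in> V"
  show "tau d \<in> extensional Sr" unfolding tau_def by simp
  show "bij_betw (tau d) Sr Sr"
    by (rule bij_betw_byWitness[where f'="tau d"]) (auto simp: tau_invol[OF d] tau_in[OF d])
  show "\<forall>x\<in>Sr. \<forall>y\<in>Sr. tau d (x + y) = tau d x + tau d y \<and> tau d (x * y) = tau d x * tau d y"
    using tau_hom[OF d] unfolding homL_def by blast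
  have H: "is_subfield {x\<in>Sr. tau d x = id x}" by (rule agree_subfield[OF Sr_subfield tau_hom[OF d] homL_id])
  have "insert t k \<subseteq> {x\<in>Sr. tau d x = id x}" using tau_k[OF d] tau_t[OF d] k_Sr t_Sr by auto
  then have "Kt \<subseteq> {x\<in>Sr. tau d x = id x}" by (rule gen_field_sub[OF H])
  then show "\<forall>x\<in>Kt. tau d x = x" by auto
qed

lemma k_Kt: "k \<subseteq> Kt" using gen_field_incl[of "insert t k"] by blast

lemma Gal_char:
  assumes s: "s \<in> field_auts_fixing Sr Kt"
  shows "\<exists>d\<in>V. s = tau d"
proof -
  have ext: "s \<in> extensional Sr" and bij: "bij_betw s Sr Sr"
    and fixK: "\<forall>x\<in>Kt. s x = x" using s unfolding field_auts_fixing_def by auto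
  have one: "1 \<in> Kt" using sf_1[OF gen_field_subfield] by blast
  have h: "homL Sr s" unfolding homL_def
    using s fixK one unfolding field_auts_fixing_def by auto
  have fixk: "\<forall>c\<in>k. s c = c" using fixK k_Kt by blast
  have tK: "t \<in> Kt" using gen_field_incl[of "insert t k"] by (meson insertI1 subsetD)
  have "s t = t" using fixK tK by blast
  moreover have "s (poly FnP r) = poly FnP (s r)"
    by (rule hom_poly[OF Sr_subfield k_Sr h fixk FnP_over r_Sr])
  ultimately have "Fn (s r) = t" using poly_FnP root' by simp
  then have "Fn (r + (s r - r)) = Fn r + 0" using root' by simp
  then have "Fn r + Ln (s r - r) = Fn r + 0" using Fn_add[of r "s r - r"] by simp
  then have dV: "s r - r \<in> V" unfolding V_def by simp
  define d where "d = s r - r"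
  have dV': "d \<in> V" using dV d_def by simp
  have H: "is_subfield {x\<in>Sr. s x = tau d x}" by (rule agree_subfield[OF Sr_subfield h tau_hom[OF dV']])
  have "Sr \<subseteq> {x\<in>Sr. s x = tau d x}"
    by (rule Sr_min[OF H]) (use k_Sr fixk tau_k[OF dV'] r_Sr tau_r[OF dV'] d_def in auto)
  then have eqS: "\<And>x. x \<in> Sr \<Longrightarrow> s x = tau d x" by blast
  have "tau d \<in> extensional Sr" unfolding tau_def by simp
  then have "s = tau d"
    by (rule extensionalityI[OF ext _ eqS])
  then show ?thesis using dV' by blast
qed

end



lemma of_int_mod2: "CHAR('b::field) = 2 \<Longrightarrow> (of_int (x mod 2) :: 'b) = of_int x"
proof -
  assume c: "CHAR('b) = 2"
  have "x = 2 * (x div 2) + x mod 2" by simp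
  then have "(of_int x :: 'b) = of_int 2 * of_int (x div 2) + of_int (x mod 2)"
    by (metis of_int_add of_int_mult)
  moreover have "(of_int 2 :: 'b) = 0" using char2_two[OF c] by simp
  ultimately show ?thesis by simp
qed

context gsetup
begin

primrec cseq :: "nat \<Rightarrow> 'b" where
  "cseq 0 = a1 / a2"
| "cseq (Suc j) = (SOME x. x \<in> k \<and> Lf x = cseq j)"

lemma Lf_eq: "Lf x = x * (a1 + x * a2)" by (simp add: Lf_def)

lemma exists_pre: "c \<in> k \<Longrightarrow> \<exists>x\<in>k. Lf x = c"
proof -
  assume c: "c \<in> k"
  have po: "poly_over k [:-c, a1, a2:]" using c a1 a2 sf
    by (simp add: poly_over_pCons poly_over_0 sf_uminus)
  have "degree [:-c, a1, a2:] = 2" using a2_nz by simp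
  then obtain x where x: "x \<in> k" "poly [:-c, a1, a2:] x = 0"
    using ac po unfolding alg_closed_subfield_def by fastforce
  have "poly [:-c, a1, a2:] x = Lf x - c" by (simp add: Lf_def algebra_simps)
  then show ?thesis using x by auto
qed

lemma cseq_k: "cseq j \<in> k"
proof (induct j)
  case 0 show ?case using a1 a2 sf_divide[OF sf] by simp
next
  case (Suc j)
  then have "\<exists>x. x \<in> k \<and> Lf x = cseq j" using exists_pre by blast
  then show ?case by (simp, rule someI2_ex) auto
qed

lemma cseq_Suc: "Lf (cseq (Suc j)) = cseq j"
proof -
  have "\<exists>x. x \<in> k \<and> Lf x = cseq j" using exists_pre cseq_k by blast
  then show ?thesis by (simp, rule someI2_ex) auto
qed

lemma cseq_0: "Lf (cseq 0) = 0"
proof -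
  have "Lf (cseq 0) = a1 / a2 * (a1 + a1)" using a2_nz by (simp add: Lf_eq)
  then show ?thesis using char2_xx[OF char] by simp
qed

lemma c0_nz: "cseq 0 \<noteq> 0" using a1_nz a2_nz by simp

lemma iterL: "i \<le> j \<Longrightarrow> (Lf ^^ i) (cseq j) = cseq (j - i)"
proof (induct i)
  case 0 then show ?case by simp
next
  case (Suc i)
  then have "(Lf ^^ Suc i) (cseq j) = Lf (cseq (j - i))" by simp
  also have "j - i = Suc (j - Suc i)" using Suc.prems by simp
  finally show ?case using cseq_Suc by simp
qed

lemma iter0: "j < m \<Longrightarrow> (Lf ^^ m) (cseq j) = 0"
proof -
  assume "j < m"
  then have m: "m = (m - Suc j) + Suc j" by simp
  have "(Lf ^^ Suc j) (cseq j) = 0" using iterL[of j j] cseq_0 by simp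
  then have "(Lf ^^ m) (cseq j) = (Lf ^^ (m - Suc j)) 0"
    by (subst m, simp only: funpow_add o_apply)
  then show ?thesis using Lm_0 by simp
qed

lemma sum_nz: "finite S \<Longrightarrow> S \<noteq> {} \<Longrightarrow> (\<Sum>j\<in>S. cseq j) \<noteq> 0"
proof
  assume S: "finite S" "S \<noteq> {}" and z: "(\<Sum>j\<in>S. cseq j) = 0"
  define m where "m = Max S"
  have mS: "m \<in> S" using S m_def by simp
  have "(Lf ^^ m) (\<Sum>j\<in>S. cseq j) = (\<Sum>j\<in>S. (Lf ^^ m) (cseq j))" using Lm_sum[OF S(1)] .
  also have "\<dots> = (\<Sum>j\<in>S. if j = m then cseq 0 else 0)"
  proof (rule sum.cong[OF refl])
    fix j assume "j \<in> S"
    then have "j \<le> m" using S m_def by simp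
    then show "(Lf ^^ m) (cseq j) = (if j = m then cseq 0 else 0)"
      using iterL[of m m] iter0[of j m] by (cases "j = m") auto
  qed
  also have "\<dots> = cseq 0" using mS S(1) by (simp add: sum.delta')
  finally show False using z Lm_0 c0_nz by simp
qed

lemma cseq_V: "j < n \<Longrightarrow> cseq j \<in> V"
  unfolding V_def using iter0 by simp

lemma V_sum: "finite S \<Longrightarrow> (\<And>j. j \<in> S \<Longrightarrow> g j \<in> V) \<Longrightarrow> (\<Sum>j\<in>S. g j) \<in> V"
  by (induct S rule: finite_induct) (auto intro: V_0 V_add)

abbreviation "CC \<equiv> carrier (C2_power n)"

lemma CC_eq: "CC = (\<Pi>\<^sub>E j\<in>{..<n}. {0..<2})"
  by (simp add: C2_power_def carrier_integer_mod_group)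

definition "DD e = (\<Sum>j<n. of_int (e j) * cseq j)"

lemma DD_V: "e \<in> CC \<Longrightarrow> DD e \<in> V"
  unfolding DD_def
proof (rule V_sum)
  fix j assume e: "e \<in> CC" and j: "j \<in> {..<n}"
  then have "e j \<in> {0..<2}" using CC_eq by auto
  then have "e j = 0 \<or> e j = 1" by auto
  then show "of_int (e j) * cseq j \<in> V" using cseq_V[of j] j V_0 by auto
qed simp

lemma DD_mult: "e \<in> CC \<Longrightarrow> e' \<in> CC \<Longrightarrow> DD (e \<otimes>\<^bsub>C2_power n\<^esub> e') = DD e + DD e'"
proof -
  assume e: "e \<in> CC" "e' \<in> CC"
  have m: "e \<otimes>\<^bsub>C2_power n\<^esub> e' = (\<lambda>j\<in>{..<n}. (e j + e' j) mod 2)"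
    by (simp add: C2_power_def)
  have "DD (e \<otimes>\<^bsub>C2_power n\<^esub> e') = (\<Sum>j<n. (of_int (e j) + of_int (e' j)) * cseq j)"
    unfolding DD_def m by (rule sum.cong[OF refl]) (simp add: of_int_mod2[OF char])
  also have "\<dots> = DD e + DD e'" unfolding DD_def by (simp add: distrib_right sum.distrib)
  finally show ?thesis .
qed

lemma DD_inj: "e \<in> CC \<Longrightarrow> e' \<in> CC \<Longrightarrow> DD e = DD e' \<Longrightarrow> e = e'"
proof -
  assume e: "e \<in> CC" "e' \<in> CC" and eq: "DD e = DD e'"
  define h where "h j = (e j + e' j) mod 2" for j
  have "DD (e \<otimes>\<^bsub>C2_power n\<^esub> e') = DD e + DD e" using DD_mult[OF e] eq by simp
  then have "DD (e \<otimes>\<^bsub>C2_power n\<^esub> e') = 0" using char2_xx[OF char] by simp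
  moreover have "DD (e \<otimes>\<^bsub>C2_power n\<^esub> e') = (\<Sum>j<n. of_int (h j) * cseq j)"
    unfolding DD_def h_def C2_power_def by (intro sum.cong) auto
  moreover have "(\<Sum>j<n. of_int (h j) * cseq j) = (\<Sum>j<n. if h j = 1 then cseq j else 0)"
  proof (rule sum.cong[OF refl])
    fix j
    have "h j = 0 \<or> h j = 1" unfolding h_def by auto
    then show "of_int (h j) * cseq j = (if h j = 1 then cseq j else 0)" by auto
  qed
  moreover have "(\<Sum>j<n. if h j = 1 then cseq j else 0) = (\<Sum>j\<in>{j\<in>{..<n}. h j = 1}. cseq j)"
    by (rule sum.inter_filter[symmetric]) simp
  ultimately have "(\<Sum>j\<in>{j\<in>{..<n}. h j = 1}. cseq j) = 0" by simp
  then have emp: "{j\<in>{..<n}. h j = 1} = {}" using sum_nz[of "{j\<in>{..<n}. h j = 1}"] by auto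
  show "e = e'"
  proof (rule PiE_ext)
    show "e \<in> (\<Pi>\<^sub>E j\<in>{..<n}. {0..<2})" "e' \<in> (\<Pi>\<^sub>E j\<in>{..<n}. {0..<2})" using e CC_eq by auto
    fix j assume j: "j \<in> {..<n}"
    then have "e j \<in> {0..<2}" "e' j \<in> {0..<2}" using e CC_eq by auto
    moreover have "h j \<noteq> 1" using emp j by blast
    moreover have "h j = 0 \<or> h j = 1" unfolding h_def by auto
    ultimately show "e j = e' j" unfolding h_def by (auto; presburger)
  qed
qed

lemma card_CC: "card CC = 2 ^ n"
  by (simp add: CC_eq card_PiE)

lemma V_finite: "finite V" and card_V: "card V \<le> 2 ^ n"
proof -
  have "V = {x. poly LnP x = 0}" unfolding V_def using poly_LnP by simp
  then show "finite V" "card V \<le> 2 ^ n"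
    using poly_roots_finite[OF LnP_nz] card_poly_roots_bound[OF LnP_nz] degree_LnP by auto
qed

lemma DD_image: "DD ` CC = V"
proof (rule card_seteq[OF V_finite])
  show "DD ` CC \<subseteq> V" using DD_V by blast
  have "inj_on DD CC" using DD_inj by (meson inj_onI)
  then have "card (DD ` CC) = 2 ^ n" using card_image card_CC by metis
  then show "card V \<le> card (DD ` CC)" using card_V by simp
qed

definition "Phi e = tau (DD e)"

lemma Phi_iso: "Phi \<in> iso (C2_power n) (Gal_group Sr Kt)"
  unfolding iso_def hom_def
proof (intro CollectI conjI Pi_I ballI)
  fix e assume "e \<in> CC"
  then show "Phi e \<in> carrier (Gal_group Sr Kt)"
    unfolding Phi_def Gal_group_def using tau_Gal DD_V by simp
next
  fix e e' assume e: "e \<in> CC" "e' \<in> CC"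
  have dV: "DD e \<in> V" "DD e' \<in> V" using DD_V e by auto
  show "Phi (e \<otimes>\<^bsub>C2_power n\<^esub> e') = Phi e \<otimes>\<^bsub>Gal_group Sr Kt\<^esub> Phi e'"
    unfolding Phi_def DD_mult[OF e] Gal_group_def
  proof (simp, rule extensionalityI[where A=Sr])
    show "tau (DD e + DD e') \<in> extensional Sr" unfolding tau_def by simp
    show "compose Sr (tau (DD e)) (tau (DD e')) \<in> extensional Sr" by (simp add: compose_def)
    fix x assume "x \<in> Sr"
    then show "tau (DD e + DD e') x = compose Sr (tau (DD e)) (tau (DD e')) x"
      using tau_comp[OF dV] by (simp add: compose_def)
  qed
next
  show "bij_betw Phi CC (carrier (Gal_group Sr Kt))"
    unfolding bij_betw_def
  proof
    show "inj_on Phi CC"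
    proof (rule inj_onI)
      fix e e' assume e: "e \<in> CC" "e' \<in> CC" and eq: "Phi e = Phi e'"
      have "r + DD e = r + DD e'" using eq tau_r DD_V e unfolding Phi_def by metis
      then show "e = e'" using DD_inj e by simp
    qed
    show "Phi ` CC = carrier (Gal_group Sr Kt)"
    proof
      show "Phi ` CC \<subseteq> carrier (Gal_group Sr Kt)"
        unfolding Phi_def Gal_group_def using tau_Gal DD_V by auto
      show "carrier (Gal_group Sr Kt) \<subseteq> Phi ` CC"
      proof
        fix s assume "s \<in> carrier (Gal_group Sr Kt)"
        then obtain d where d: "d \<in> V" "s = tau d" using Gal_char unfolding Gal_group_def by auto
        then obtain e where "e \<in> CC" "d = DD e" using DD_image by blast
        then show "s \<in> Phi ` CC" using d unfolding Phi_def by blast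
      qed
    qed
  qed
qed

lemma main_iso: "Gal_group Sr Kt \<cong> C2_power n"
proof -
  have g: "group (C2_power n)" unfolding C2_power_def by (rule product_group) simp
  have "C2_power n \<cong> Gal_group Sr Kt" using Phi_iso unfolding is_iso_def by blast
  then show ?thesis by (rule group.iso_sym[OF g])
qed

end


theorem theorem5p5:
  fixes k :: "'b::field set" and t a0 a1 a2 :: 'b and n :: nat
  assumes "CHAR('b) = 2"
    and "alg_closed_subfield k"
    and "transcendental_over k t"
    and "a0 \<in> k" "a1 \<in> k" "a2 \<in> k" "a2 * a1 \<noteq> 0"
    and "splits (poly_iter [:a0, a1, a2:] n - [:t:])"
  shows "Gal_group (splitting_field (gen_field (insert t k)) (poly_iter [:a0, a1, a2:] n - [:t:]))
                   (gen_field (insert t k))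
         \<cong> C2_power n"
proof -
  let ?P = "poly_iter [:a0, a1, a2:] n"
  obtain c rs where g: "?P - [:t:] = smult c (\<Prod>r\<leftarrow>rs. [:- r, 1:])"
    using assms(8) unfolding splits_def by blast
  have "rs \<noteq> []"
  proof
    assume "rs = []"
    then have "?P - [:t:] = [:c:]" using g by simp
    then have "?P = [:c:] + [:t:]" by (metis diff_eq_eq)
    then have "?P = [:c + t:]" by simp
    then have "degree ?P = 0" by simp
    moreover have "degree ?P = 2 ^ n" using assms(7) by (simp add: degree_poly_iter numeral_2_eq_2)
    ultimately show False by simp
  qed
  then obtain x xs where rs: "rs = x # xs" by (cases rs) auto
  have "poly (?P - [:t:]) x = 0" using g rs by simp
  then have root: "(poly [:a0,a1,a2:] ^^ n) x = t" by (simp add: poly_poly_iter)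
  interpret gsetup k t a0 a1 a2 n x
    by unfold_locales (use assms root in auto)
  show ?thesis using split_eq main_iso by simp
qed

end
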